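(* Let $C_\bullet(L)$ be the chain complex with $C_n(L)=\mathrm{id}_L\otimes_R B_+^{\otimes_R n}\otimes_R\mathrm{id}_L$ and differential $d(a_1\otimes\cdots\otimes a_n)=\sum_{i=1}^{n-1}(-1)^i a_1\otimes\cdots\otimes a_ia_{i+1}\otimes\cdots\otimes a_n$, and let $C_\bullet^{(m)}(L)$ be its subcomplex spanned by tensors of internal degree $m$. Then for all $n\ge1$: $H_n(C_\bullet^{(n)}(L))=0$; $H_n(C_\bullet^{(n-1)}(L))\cong k$ if $n\in\{3,4\}$ and $0$ otherwise; $H_n(C_\bullet^{(n-2)}(L))\cong k$ if $n\in\{7,8\}$ and $0$ otherwise; $H_n(C_\bullet^{(n-3)}(L))\cong k$ if $n\in\{11,12\}$ and $0$ otherwise.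
   Context: Let $k$ be a field with $\operatorname{char}k\neq2,3$. Let $B$ be the graded $k$-algebra with $k$-basis $\mathrm{id}_L,\mathrm{id}_{\mathcal O},\theta$ (degree $0$) and $\eta,\xi,\xi_L$ (degree $1$), whose only nonzero products of basis elements are $\mathrm{id}_L\mathrm{id}_L=\mathrm{id}_L$, $\mathrm{id}_{\mathcal O}\mathrm{id}_{\mathcal O}=\mathrm{id}_{\mathcal O}$, $\mathrm{id}_L\xi_L=\xi_L\mathrm{id}_L=\xi_L$, $\mathrm{id}_{\mathcal O}\xi=\xi\mathrm{id}_{\mathcal O}=\xi$, $\mathrm{id}_L\eta=\eta\,\mathrm{id}_{\mathcal O}=\eta$, $\mathrm{id}_{\mathcal O}\theta=\theta\,\mathrm{id}_L=\theta$, $\theta\eta=\xi$, $\eta\theta=\xi_L$. Let $R=k\langle\mathrm{id}_L,\mathrm{id}_{\mathcal O}\rangle$ and $B_+=\langle\theta,\eta,\xi,\xi_L\rangle$, so $B=R\oplus B_+$; tensor products are over $R$. Thus $B_+^{\otimes_R n}$ has $k$-basis the words $a_1\otimes\cdots\otimes a_n$, $a_i\in\{\theta,\eta,\xi,\xi_L\}$, with the right idempotent of $a_i$ equal to the left idempotent of $a_{i+1}$, where (left, right) idempotents are $\theta:(\mathrm{id}_{\mathcal O},\mathrm{id}_L)$, $\eta:(\mathrm{id}_L,\mathrm{id}_{\mathcal O})$, $\xi:(\mathrm{id}_{\mathcal O},\mathrm{id}_{\mathcal O})$, $\xi_L:(\mathrm{id}_L,\mathrm{id}_L)$; $\mathrm{id}_L\otimes_R(\cdot)\otimes_R\mathrm{id}_L$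 selects words whose first letter has left idempotent $\mathrm{id}_L$ and last letter right idempotent $\mathrm{id}_L$. The internal degree of a word is the sum of the degrees of its letters; $d$ preserves it. *)

theory Defs
  imports Main
begin

text \<open>Idempotents of R and the basis letters of B_+ (theta, eta, xi, xi_L).\<close>
datatype idem = IdL | IdO
datatype letter = Th | Et | Xi | XiL

fun lft :: "letter \<Rightarrow> idem" where
  "lft Th = IdO" | "lft Et = IdL" | "lft Xi = IdO" | "lft XiL = IdL"

fun rgt :: "letter \<Rightarrow> idem" where
  "rgt Th = IdL" | "rgt Et = IdO" | "rgt Xi = IdO" | "rgt XiL = IdL"

fun ldeg :: "letter \<Rightarrow> int" where
  "ldeg Th = 0" | "ldeg Et = 1" | "ldeg Xi = 1" | "ldeg XiL = 1"

definition wdeg :: "letter list \<Rightarrow> int" where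
  "wdeg w = sum_list (map ldeg w)"

fun mult :: "letter \<Rightarrow> letter \<Rightarrow> letter option" where
  "mult Th Et = Some Xi"
| "mult Et Th = Some XiL"
| "mult _ _ = None"

definition composable :: "letter list \<Rightarrow> bool" where
  "composable w \<longleftrightarrow> (\<forall>j. Suc j < length w \<longrightarrow> rgt (w ! j) = lft (w ! Suc j))"

text \<open>Basis words of C_n(L) = id_L (B_+)^{\<otimes> n} id_L, for n \<ge> 1.\<close>
definition Cword :: "nat \<Rightarrow> letter list \<Rightarrow> bool" where
  "Cword n w \<longleftrightarrow> length w = n \<and> w \<noteq> [] \<and> composable w \<and>
     lft (hd w) = IdL \<and> rgt (last w) = IdL"

definition Cwords :: "nat \<Rightarrow> letter list set" where
  "Cwords n = {w. Cword n w}"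

text \<open>Merge positions j, j+1 (0-based; this is a_{j+1} a_{j+2} in 1-based notation).\<close>
definition merge :: "nat \<Rightarrow> letter list \<Rightarrow> letter list option" where
  "merge j w = (case mult (w ! j) (w ! Suc j) of
       None \<Rightarrow> None
     | Some c \<Rightarrow> Some (take j w @ c # drop (Suc (Suc j)) w))"

text \<open>Coefficient of the basis word w in d(v); the 1-based index i = j+1 carries sign (-1)^i.\<close>
definition dcoef :: "letter list \<Rightarrow> letter list \<Rightarrow> 'k::comm_ring_1" where
  "dcoef v w = (\<Sum>j<length v - 1.
      (case merge j v of None \<Rightarrow> 0 | Some u \<Rightarrow> if u = w then (-1) ^ (Suc j) else 0))"

text \<open>Chains are k-valued coefficient functions on words.
  The differential d : C_n(L) \<rightarrow> C_{n-1}(L), extended linearly from basis words.\<close>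
definition dd :: "nat \<Rightarrow> (letter list \<Rightarrow> 'k::comm_ring_1) \<Rightarrow> (letter list \<Rightarrow> 'k)" where
  "dd n c = (\<lambda>w. \<Sum>v\<in>Cwords n. c v * dcoef v w)"

definition chains :: "nat \<Rightarrow> int \<Rightarrow> (letter list \<Rightarrow> 'k::comm_ring_1) set" where
  "chains n m = {c. \<forall>w. c w \<noteq> 0 \<longrightarrow> w \<in> Cwords n \<and> wdeg w = m}"

definition cycles :: "nat \<Rightarrow> int \<Rightarrow> (letter list \<Rightarrow> 'k::comm_ring_1) set" where
  "cycles n m = {c \<in> chains n m. dd n c = (\<lambda>_. 0)}"

definition boundaries :: "nat \<Rightarrow> int \<Rightarrow> (letter list \<Rightarrow> 'k::comm_ring_1) set" where
  "boundaries n m = dd (Suc n) ` chains (Suc n) m"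

definition H_zero :: "('a \<Rightarrow> 'k::field) set \<Rightarrow> ('a \<Rightarrow> 'k) set \<Rightarrow> bool" where
  "H_zero Z B \<longleftrightarrow> Z \<subseteq> B"

text \<open>H = Z/B is isomorphic to k: spanned by the class of a cycle z which is not a boundary.\<close>
definition H_iso_k :: "('a \<Rightarrow> 'k::field) set \<Rightarrow> ('a \<Rightarrow> 'k) set \<Rightarrow> bool" where
  "H_iso_k Z B \<longleftrightarrow> (\<exists>z\<in>Z. z \<notin> B \<and>
      (\<forall>c\<in>Z. \<exists>a. \<exists>b\<in>B. c = (\<lambda>x. a * z x + b x)))"

end

theory Submission
  imports Defs
begin


fun flip :: "idem \<Rightarrow> idem" where "flip IdL = IdO" | "flip IdO = IdL"
fun tlt :: "idem \<Rightarrow> letter" where "tlt IdL = Et" | "tlt IdO = Th"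
fun xl :: "idem \<Rightarrow> letter" where "xl IdL = XiL" | "xl IdO = Xi"
definition isx :: "letter \<Rightarrow> bool" where "isx a \<longleftrightarrow> a = Xi \<or> a = XiL"
fun pr :: "letter \<Rightarrow> letter list" where
  "pr Xi = [Th, Et]" | "pr XiL = [Et, Th]" | "pr a = [a]"
definition spl :: "nat \<Rightarrow> letter list \<Rightarrow> letter list" where
  "spl p w = take p w @ pr (w!p) @ drop (Suc p) w"
definition sg :: "nat \<Rightarrow> 'k::comm_ring_1" where "sg p = (-1)^(Suc p)"
definition dT :: "(letter list \<Rightarrow> 'k::comm_ring_1) \<Rightarrow> letter list \<Rightarrow> 'k" where
  "dT c w = (\<Sum>p<length w. if isx (w!p) then sg p * c (spl p w) else 0)"

lemma sg_simps[simp]: "sg 0 = -1" "sg (Suc p) = - sg p"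
  by (auto simp: sg_def)

lemma isx_simps[simp]: "isx Xi" "isx XiL" "\<not> isx Th" "\<not> isx Et"
  by (auto simp: isx_def)

lemma spl_0[simp]: "spl 0 (a # u) = pr a @ u" by (simp add: spl_def)
lemma spl_Suc[simp]: "spl (Suc p) (a # u) = a # spl p u" by (simp add: spl_def)

lemma dT_Nil[simp]: "dT c [] = 0" by (simp add: dT_def)

lemma dT_Cons: "dT c (a # u) = (if isx a then - c (pr a @ u) else 0) +
   (\<Sum>p<length u. if isx (u!p) then - (sg p * c (a # spl p u)) else 0)"
  unfolding dT_def by (simp add: sum.lessThan_Suc_shift del: sum.lessThan_Suc; rule sum.cong; simp)

lemma dT_Cons2: "dT c (a # b # u) = (if isx a then - c (pr a @ b # u) else 0) +
   (if isx b then c (a # pr b @ u) else 0) +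
   (\<Sum>p<length u. if isx (u!p) then sg p * c (a # b # spl p u) else 0)"
  by (simp add: dT_Cons sum.lessThan_Suc_shift del: sum.lessThan_Suc; rule sum.cong; simp)

lemma dT_single: "dT c [a] = (if isx a then - c (pr a) else 0)"
  by (simp add: dT_Cons)

lemma dT_pair: "dT c [a, b] = (if isx a then - c (pr a @ [b]) else 0) +
   (if isx b then c (a # pr b) else 0)"
  by (simp add: dT_Cons2)

lemma length_spl: "p < length w \<Longrightarrow> isx (w!p) \<Longrightarrow> length (spl p w) = Suc (length w)"
  by (cases "w!p") (auto simp: spl_def)

lemma dT_len: assumes "\<And>v. b v \<noteq> 0 \<Longrightarrow> length v = N" "Suc (length w) \<noteq> N"
  shows "dT b w = 0"
  unfolding dT_def
proof (rule sum.neutral, rule ballI)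
  fix p assume p: "p \<in> {..<length w}"
  show "(if isx (w!p) then sg p * b (spl p w) else 0) = 0"
  proof (cases "isx (w!p)")
    case True
    then have "length (spl p w) = Suc (length w)" using p length_spl by simp
    then have "b (spl p w) = 0" using assms by metis
    then show ?thesis by simp
  qed simp
qed

lemma dT_zero[simp]: "dT (\<lambda>_. 0) = (\<lambda>_. 0)"
  by (rule ext) (simp add: dT_def sum.neutral)

lemma dT_add: "dT (\<lambda>w. f w + g w) w = dT f w + dT g w"
  unfolding dT_def by (auto simp add: sum.distrib[symmetric] distrib_left intro!: sum.cong)

lemma dT_smult: "dT (\<lambda>w. a * f w) w = a * dT f w"
  unfolding dT_def by (auto simp add: sum_distrib_left intro!: sum.cong)

lemma flip_flip[simp]: "flip (flip s) = s" by (cases s) auto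
lemma pr_xl[simp]: "pr (xl s) = [tlt s, tlt (flip s)]" by (cases s) auto
lemma isx_tlt[simp]: "\<not> isx (tlt s)" by (cases s) auto
lemma isx_xl[simp]: "isx (xl s)" by (cases s) auto



definition Wd :: "idem \<Rightarrow> nat \<Rightarrow> letter list set" where
  "Wd s n = {w. length w = n \<and> w \<noteq> [] \<and> composable w \<and> lft (hd w) = s \<and> rgt (last w) = IdL}"
definition ch :: "idem \<Rightarrow> nat \<Rightarrow> int \<Rightarrow> (letter list \<Rightarrow> 'k::field) set" where
  "ch s n m = {c. \<forall>w. c w \<noteq> 0 \<longrightarrow> w \<in> Wd s n \<and> wdeg w = m}"
definition pre :: "idem \<Rightarrow> (letter list \<Rightarrow> 'k::comm_ring_1) \<Rightarrow> letter list \<Rightarrow> 'k" where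
  "pre s z w = (case w of a # b # u \<Rightarrow> if a = tlt s \<and> b = xl (flip s) then z u else 0 | _ \<Rightarrow> 0)"
definition Phi :: "idem \<Rightarrow> (letter list \<Rightarrow> 'k::comm_ring_1) \<Rightarrow> letter list \<Rightarrow> 'k" where
  "Phi s c v = c (tlt s # xl (flip s) # v) + c (xl s # tlt s # v)"
definition hh :: "idem \<Rightarrow> (letter list \<Rightarrow> 'k::comm_ring_1) \<Rightarrow> letter list \<Rightarrow> 'k" where
  "hh s c w = (case w of a # b # u \<Rightarrow> if a = tlt s \<and> b = tlt (flip s) then - c (xl s # u) else 0 | _ \<Rightarrow> 0)"
definition dl :: "idem \<Rightarrow> int" where "dl s = ldeg (tlt s)"

lemma composable_Nil[simp]: "composable []" by (simp add: composable_def)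
lemma composable_single[simp]: "composable [a]" by (simp add: composable_def)
lemma composable_Cons2[simp]: "composable (a # b # w) \<longleftrightarrow> rgt a = lft b \<and> composable (b # w)"
  unfolding composable_def
  apply (rule iffI)
   apply (rule conjI)
    apply (drule spec[of _ 0]; simp)
   apply clarsimp
   apply (drule_tac x="Suc j" in spec; simp)
  apply clarsimp
  apply (case_tac j; simp)
  done

lemma wdeg_Nil[simp]: "wdeg [] = 0" by (simp add: wdeg_def)
lemma wdeg_Cons[simp]: "wdeg (a # w) = ldeg a + wdeg w" by (simp add: wdeg_def)

lemma Wd_Nil[simp]: "[] \<notin> Wd s n" by (simp add: Wd_def)
lemma Wd_single[simp]: "[a] \<in> Wd s n \<longleftrightarrow> n = 1 \<and> lft a = s \<and> rgt a = IdL" by (auto simp: Wd_def)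
lemma Wd_Cons2: "a # b # u \<in> Wd s n \<longleftrightarrow> n = Suc (length (b # u)) \<and> lft a = s \<and> rgt a = lft b \<and> b # u \<in> Wd (lft b) (length (b # u))"
  by (auto simp: Wd_def)

lemma letter_simps[simp]: "lft (tlt s) = s" "rgt (tlt s) = flip s" "lft (xl s) = s" "rgt (xl s) = s"
  "ldeg (xl s) = 1" "tlt s \<noteq> xl s'" "xl s' \<noteq> tlt s" "tlt s = tlt s' \<longleftrightarrow> s = s'" "xl s = xl s' \<longleftrightarrow> s = s'"
  "flip s \<noteq> s" "s \<noteq> flip s"
  by (cases s; cases s'; simp)+

lemma dl_sum: "ldeg (tlt s) + ldeg (tlt (flip s)) = 1" by (cases s) auto

lemma ch_out: "c \<in> ch s n m \<Longrightarrow> w \<notin> Wd s n \<Longrightarrow> c w = 0" by (auto simp: ch_def)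
lemma ch_deg: "c \<in> ch s n m \<Longrightarrow> wdeg w \<noteq> m \<Longrightarrow> c w = 0" by (auto simp: ch_def)
lemma ch_len: "c \<in> ch s n m \<Longrightarrow> length w \<noteq> n \<Longrightarrow> c w = 0" by (auto simp: ch_def Wd_def)

lemma ch_add: "f \<in> ch s n m \<Longrightarrow> g \<in> ch s n m \<Longrightarrow> (\<lambda>w. f w + g w) \<in> ch s n m"
  unfolding ch_def
proof (clarify)
  fix w assume f: "\<forall>w. f w \<noteq> 0 \<longrightarrow> w \<in> Wd s n \<and> wdeg w = m" and g: "\<forall>w. g w \<noteq> 0 \<longrightarrow> w \<in> Wd s n \<and> wdeg w = m"
    and ne: "f w + g w \<noteq> 0"
  then have "f w \<noteq> 0 \<or> g w \<noteq> 0" by auto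
  then show "w \<in> Wd s n \<and> wdeg w = m" using f g by blast
qed
lemma ch_0: "(\<lambda>_. 0) \<in> ch s n m" by (auto simp: ch_def)

lemma pre_lin: "pre s (\<lambda>x. a * f x + g x) w = a * pre s f w + pre s g w"
  by (cases w rule: remdups_adj.cases) (simp_all add: pre_def)
lemma pre_zero: "pre s (\<lambda>_. 0) = (\<lambda>_. 0)"
proof
  fix w show "pre s (\<lambda>_. 0) w = 0" by (cases w rule: remdups_adj.cases) (simp_all add: pre_def)
qed
lemma Phi_pre: "Phi s (pre s z) = z"
  by (auto simp: pre_def Phi_def)
lemma Phi_zero: "Phi s (\<lambda>_. 0) = (\<lambda>_. 0)"
  by (auto simp: Phi_def)

lemma if_add0: "(if P then x + y else 0) = (if P then x else 0) + (if P then (y::'a::comm_ring_1) else 0)"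
  by simp

lemma pre_Cons2[simp]: "pre s z (a # b # u) = (if a = tlt s \<and> b = xl (flip s) then z u else 0)"
  by (simp add: pre_def)
lemma pre_Nil[simp]: "pre s z [] = 0" by (simp add: pre_def)
lemma pre_single[simp]: "pre s z [a] = 0" by (simp add: pre_def)
lemma pre_pr1: "isx a \<Longrightarrow> pre s z (pr a @ v) = 0"
  by (cases a; cases s; simp)
lemma pre_pr2: "isx b \<Longrightarrow> pre s z (a # pr b @ v) = 0"
  by (cases b; cases s; simp)

lemma dT_pre: "dT (pre s z) w = pre s (dT z) w"
proof (cases w rule: remdups_adj.cases)
  case 1 then show ?thesis by simp
next
  case (2 a) then show ?thesis
    using pre_pr1[of a s z "[]"] by (simp add: dT_single)
next
  case (3 a b u)
  have "dT (pre s z) (a # b # u) = pre s (dT z) (a # b # u)"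
  proof (cases "a = tlt s \<and> b = xl (flip s)")
    case True then show ?thesis by (simp only: dT_Cons2) (simp add: pre_pr1 pre_pr2 dT_def cong: if_cong)
  next
    case False
    then have h0: "\<And>p. pre s z (a # b # spl p u) = 0" by auto
    show ?thesis using False by (simp only: dT_Cons2 h0 cong: if_cong) (auto simp add: pre_pr1 pre_pr2 cong: if_cong)
  qed
  then show ?thesis using 3 by simp
qed

lemma Phi_dT: "Phi s (dT b) v = dT (Phi s b) v"
  unfolding Phi_def
  apply (simp only: dT_Cons2)
  apply (simp add: dT_def Phi_def sum.distrib[symmetric])
  apply (rule sum.cong; simp add: distrib_left)
  done



lemma hh_Cons2[simp]: "hh s c (a # b # u) = (if a = tlt s \<and> b = tlt (flip s) then - c (xl s # u) else 0)"
  by (simp add: hh_def)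
lemma hh_Nil[simp]: "hh s c [] = 0" by (simp add: hh_def)
lemma hh_single[simp]: "hh s c [a] = 0" by (simp add: hh_def)

lemma Wd_Cons: "a # u \<in> Wd s n \<longleftrightarrow> n = Suc (length u) \<and> lft a = s \<and> (u = [] \<longrightarrow> rgt a = IdL) \<and>
   (u \<noteq> [] \<longrightarrow> rgt a = lft (hd u) \<and> u \<in> Wd (rgt a) (length u))"
  by (cases u) (auto simp: Wd_Cons2)

lemma composable_Cons: "composable (a # u) \<longleftrightarrow> (u = [] \<or> rgt a = lft (hd u) \<and> composable u)"
  by (cases u) auto

lemma letter_lft: "lft b = s \<Longrightarrow> b = tlt s \<or> b = xl s"
  by (cases b; cases s; simp)

lemma if_neg0: "(if P then - y else 0) = - (if P then y else (0::'a::comm_ring_1))" by simp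

lemma ch_hh: assumes c: "c \<in> ch s n m" shows "hh s c \<in> ch s (Suc n) m"
  unfolding ch_def
proof (clarify)
  fix w assume ne: "hh s c w \<noteq> 0"
  then obtain u where w: "w = tlt s # tlt (flip s) # u" and cu: "c (xl s # u) \<noteq> 0"
    by (cases w rule: remdups_adj.cases) (auto split: if_splits)
  from cu c have W: "xl s # u \<in> Wd s n" and D: "wdeg (xl s # u) = m" by (auto simp: ch_def)
  from D have "wdeg w = m" using w dl_sum[of s] by simp
  moreover have "w \<in> Wd s (Suc n)"
    using W unfolding w by (auto simp: Wd_Cons)
  ultimately show "w \<in> Wd s (Suc n) \<and> wdeg w = m" by simp
qed

lemma ch_pre: assumes z: "z \<in> ch (flip s) n m'" and m: "m = m' + 1 + dl s"
  shows "pre s z \<in> ch s (Suc (Suc n)) m"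
  unfolding ch_def
proof (clarify)
  fix w assume ne: "pre s z w \<noteq> 0"
  then obtain u where w: "w = tlt s # xl (flip s) # u" and cu: "z u \<noteq> 0"
    by (cases w rule: remdups_adj.cases) (auto split: if_splits)
  from cu z have W: "u \<in> Wd (flip s) n" and D: "wdeg u = m'" by (auto simp: ch_def)
  from D have "wdeg w = m" using w m by (simp add: dl_def)
  moreover have "w \<in> Wd s (Suc (Suc n))"
    using W unfolding w by (auto simp: Wd_Cons Wd_def composable_Cons)
  ultimately show "w \<in> Wd s (Suc (Suc n)) \<and> wdeg w = m" by simp
qed

lemma ch_Phi: assumes c: "c \<in> ch s (Suc (Suc n)) m" and n: "n \<ge> 1" and m: "m' = m - 1 - dl s"
  shows "Phi s c \<in> ch (flip s) n m'"
  unfolding ch_def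
proof (clarify)
  fix v assume ne: "Phi s c v \<noteq> 0"
  then have "c (tlt s # xl (flip s) # v) \<noteq> 0 \<or> c (xl s # tlt s # v) \<noteq> 0"
    by (auto simp: Phi_def)
  then show "v \<in> Wd (flip s) n \<and> wdeg v = m'"
  proof
    assume "c (tlt s # xl (flip s) # v) \<noteq> 0"
    with c have W: "tlt s # xl (flip s) # v \<in> Wd s (Suc (Suc n))" and D: "wdeg (tlt s # xl (flip s) # v) = m"
      by (auto simp: ch_def)
    from W n have "v \<noteq> []" by (auto simp: Wd_def)
    with W have "v \<in> Wd (flip s) n" by (auto simp: Wd_Cons)
    moreover from D have "wdeg v = m'" using m by (simp add: dl_def)
    ultimately show ?thesis by simp
  next
    assume "c (xl s # tlt s # v) \<noteq> 0"
    with c have W: "xl s # tlt s # v \<in> Wd s (Suc (Suc n))" and D: "wdeg (xl s # tlt s # v) = m"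
      by (auto simp: ch_def)
    from W n have "v \<noteq> []" by (auto simp: Wd_def)
    with W have "v \<in> Wd (flip s) n" by (auto simp: Wd_Cons)
    moreover from D have "wdeg v = m'" using m by (simp add: dl_def)
    ultimately show ?thesis by simp
  qed
qed

lemma decomp: assumes c: "c \<in> ch s n m" and cyc: "dT c = (\<lambda>_. 0)" and n: "n \<ge> 2"
  shows "c w = dT (hh s c) w + pre s (Phi s c) w"
proof (cases w rule: remdups_adj.cases)
  case 1 then show ?thesis using ch_out[OF c] by simp
next
  case (2 a)
  have "c [a] = 0" "c [xl s] = 0" using ch_len[OF c] n by auto
  then show ?thesis using 2 by (cases a; cases s; simp add: dT_single)
next
  case (3 a b u)
  have z1: "lft a \<noteq> s \<Longrightarrow> c (a # b # u) = 0" using ch_out[OF c] by (auto simp: Wd_Cons2)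
  have z2: "rgt a \<noteq> lft b \<Longrightarrow> c (a # b # u) = 0" using ch_out[OF c] by (auto simp: Wd_Cons2)
  have cy: "c (tlt s # tlt (flip s) # u) = - (\<Sum>p<length u. if isx (u!p) then sg p * c (xl s # spl p u) else 0)"
    using fun_cong[OF cyc, of "xl s # u"]
    by (simp add: dT_Cons if_neg0 sum_negf eq_neg_iff_add_eq_0 add.commute) (metis add.right_inverse)
  have H1: "isx a \<Longrightarrow> hh s c (pr a @ b # u) = (if a = xl s then - c (a # b # u) else 0)"
    by (cases a; cases s; simp)
  have H2: "isx b \<Longrightarrow> hh s c (a # pr b @ u) = (if a = tlt s \<and> b = xl (flip s) then - c (xl s # tlt s # u) else 0)"
    by (cases b; cases s; auto)
  have H3: "(\<Sum>p<length u. if isx (u!p) then sg p * hh s c (a # b # spl p u) else 0) =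
     (if a = tlt s \<and> b = tlt (flip s) then - (\<Sum>p<length u. if isx (u!p) then sg p * c (xl s # spl p u) else 0) else 0)"
  proof (cases "a = tlt s \<and> b = tlt (flip s)")
    case True then show ?thesis by (simp add: if_neg0 sum_negf cong: if_cong)
  next
    case False then have h0: "\<And>p. hh s c (a # b # spl p u) = 0" by auto
    show ?thesis using False by (simp only: h0 cong: if_cong) (simp cong: if_cong)
  qed
  have E: "dT (hh s c) (a # b # u) = (if isx a then (if a = xl s then c (a # b # u) else 0) else 0) +
      (if isx b then (if a = tlt s \<and> b = xl (flip s) then - c (xl s # tlt s # u) else 0) else 0) +
      (if a = tlt s \<and> b = tlt (flip s) then - (\<Sum>p<length u. if isx (u!p) then sg p * c (xl s # spl p u) else 0) else 0)"
    by (simp only: dT_Cons2 H3) (simp add: H1 H2)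
  show ?thesis
  proof (cases "a = xl s")
    case True then show ?thesis using 3 E by simp
  next
    case ax: False
    show ?thesis
    proof (cases "a = tlt s")
      case at: True
      show ?thesis
      proof (cases "b = tlt (flip s)")
        case True then show ?thesis using 3 E at cy by simp
      next
        case bt: False
        show ?thesis
        proof (cases "b = xl (flip s)")
          case True then show ?thesis using 3 E at by (simp add: Phi_def)
        next
          case False
          then have "lft b \<noteq> flip s" using bt letter_lft by blast
          then have "c w = 0" using z2 3 at by simp
          then show ?thesis using 3 E at bt False by simp
        qed
      qed
    next
      case False
      then have "lft a \<noteq> s" using ax letter_lft by blast
      then have "c w = 0" using z1 3 by simp
      then show ?thesis using 3 E ax False by simp
    qed
  qed
qed



definition cyc :: "idem \<Rightarrow> nat \<Rightarrow> int \<Rightarrow> (letter list \<Rightarrow> 'k::field) set" where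
  "cyc s n m = {c \<in> ch s n m. dT c = (\<lambda>_. 0)}"
definition bnd :: "idem \<Rightarrow> nat \<Rightarrow> int \<Rightarrow> (letter list \<Rightarrow> 'k::field) set" where
  "bnd s n m = dT ` ch s (Suc n) m"

lemma cycD: "c \<in> cyc s n m \<Longrightarrow> c \<in> ch s n m \<and> dT c = (\<lambda>_. 0)" by (simp add: cyc_def)

lemma Phi_cyc: assumes "c \<in> cyc s (Suc (Suc k)) m" "k \<ge> 1"
  shows "Phi s c \<in> cyc (flip s) k (m - 1 - dl s)"
proof -
  have c: "c \<in> ch s (Suc (Suc k)) m" and d: "dT c = (\<lambda>_. 0)" using assms cycD by blast+
  have "dT (Phi s c) = (\<lambda>_. 0)"
  proof
    fix v show "dT (Phi s c) v = 0" using Phi_dT[of s c v] d by (simp add: Phi_def)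
  qed
  then show ?thesis using ch_Phi[OF c assms(2)] by (simp add: cyc_def)
qed

lemma step_zero: assumes k: "k \<ge> 1"
  and IH: "H_zero (cyc (flip s) k (m - 1 - dl s) :: (letter list \<Rightarrow> 'k::field) set) (bnd (flip s) k (m - 1 - dl s))"
  shows "H_zero (cyc s (Suc (Suc k)) m :: (letter list \<Rightarrow> 'k) set) (bnd s (Suc (Suc k)) m)"
  unfolding H_zero_def
proof
  fix c :: "letter list \<Rightarrow> 'k" assume cc: "c \<in> cyc s (Suc (Suc k)) m"
  have c: "c \<in> ch s (Suc (Suc k)) m" and d: "dT c = (\<lambda>_. 0)" using cc cycD by blast+
  have "Phi s c \<in> bnd (flip s) k (m - 1 - dl s)" using IH Phi_cyc[OF cc k] by (auto simp: H_zero_def)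
  then obtain b' where b': "b' \<in> ch (flip s) (Suc k) (m - 1 - dl s)" and e: "Phi s c = dT b'"
    by (auto simp: bnd_def)
  define b where "b = (\<lambda>w. hh s c w + pre s b' w)"
  have "b \<in> ch s (Suc (Suc (Suc k))) m" unfolding b_def
    by (rule ch_add[OF ch_hh[OF c] ch_pre[OF b']]) simp
  moreover have "c = dT b"
  proof
    fix w
    have "c w = dT (hh s c) w + pre s (Phi s c) w" using decomp[OF c d] by simp
    also have "\<dots> = dT b w" unfolding b_def dT_add e dT_pre by simp
    finally show "c w = dT b w" .
  qed
  ultimately show "c \<in> bnd s (Suc (Suc k)) m" by (auto simp: bnd_def)
qed

lemma step_iso: assumes k: "k \<ge> 1"
  and IH: "H_iso_k (cyc (flip s) k (m - 1 - dl s) :: (letter list \<Rightarrow> 'k::field) set) (bnd (flip s) k (m - 1 - dl s))"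
  shows "H_iso_k (cyc s (Suc (Suc k)) m :: (letter list \<Rightarrow> 'k) set) (bnd s (Suc (Suc k)) m)"
proof -
  from IH obtain z' :: "letter list \<Rightarrow> 'k" where z'c: "z' \<in> cyc (flip s) k (m - 1 - dl s)" and z'nb: "z' \<notin> bnd (flip s) k (m - 1 - dl s)"
    and span: "\<forall>c\<in>cyc (flip s) k (m - 1 - dl s). \<exists>a. \<exists>b\<in>bnd (flip s) k (m - 1 - dl s). c = (\<lambda>x. a * z' x + b x)"
    unfolding H_iso_k_def by blast
  define z where "z = pre s z'"
  have z'ch: "z' \<in> ch (flip s) k (m - 1 - dl s)" and z'd: "dT z' = (\<lambda>_. 0)" using z'c cycD by blast+
  have zch: "z \<in> ch s (Suc (Suc k)) m" unfolding z_def by (rule ch_pre[OF z'ch]) simp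
  have "dT z = (\<lambda>_. 0)"
  proof
    fix w show "dT z w = 0" unfolding z_def dT_pre z'd pre_zero by simp
  qed
  then have zc: "z \<in> cyc s (Suc (Suc k)) m" using zch by (simp add: cyc_def)
  have znb: "z \<notin> bnd s (Suc (Suc k)) m"
  proof
    assume "z \<in> bnd s (Suc (Suc k)) m"
    then obtain b where b: "b \<in> ch s (Suc (Suc (Suc k))) m" and e: "z = dT b" by (auto simp: bnd_def)
    have "z' = Phi s z" unfolding z_def Phi_pre ..
    also have "\<dots> = dT (Phi s b)" unfolding e by (rule ext) (rule Phi_dT)
    finally have "z' = dT (Phi s b)" .
    moreover have "Phi s b \<in> ch (flip s) (Suc k) (m - 1 - dl s)" using ch_Phi[OF b] by simp
    ultimately show False using z'nb by (auto simp: bnd_def)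
  qed
  have "\<forall>c\<in>cyc s (Suc (Suc k)) m. \<exists>a. \<exists>b\<in>bnd s (Suc (Suc k)) m. c = (\<lambda>x. a * z x + b x)"
  proof
    fix c :: "letter list \<Rightarrow> 'k" assume cc: "c \<in> cyc s (Suc (Suc k)) m"
    have c: "c \<in> ch s (Suc (Suc k)) m" and d: "dT c = (\<lambda>_. 0)" using cc cycD by blast+
    from span Phi_cyc[OF cc k] obtain a bb where bb: "bb \<in> bnd (flip s) k (m - 1 - dl s)"
      and e: "Phi s c = (\<lambda>x. a * z' x + bb x)" by blast
    then obtain b' where b': "b' \<in> ch (flip s) (Suc k) (m - 1 - dl s)" and bbe: "bb = dT b'"
      by (auto simp: bnd_def)
    define b where "b = (\<lambda>w. hh s c w + pre s b' w)"
    have bch: "b \<in> ch s (Suc (Suc (Suc k))) m" unfolding b_def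
      by (rule ch_add[OF ch_hh[OF c] ch_pre[OF b']]) simp
    have "c = (\<lambda>x. a * z x + dT b x)"
    proof
      fix w
      have "c w = dT (hh s c) w + pre s (Phi s c) w" using decomp[OF c d] by simp
      also have "\<dots> = a * z w + dT b w" unfolding b_def dT_add e pre_lin bbe dT_pre z_def by simp
      finally show "c w = a * z w + dT b w" .
    qed
    moreover have "dT b \<in> bnd s (Suc (Suc k)) m" using bch by (simp add: bnd_def)
    ultimately show "\<exists>a. \<exists>b\<in>bnd s (Suc (Suc k)) m. c = (\<lambda>x. a * z x + b x)" by blast
  qed
  then show ?thesis unfolding H_iso_k_def using zc znb by blast
qed



lemma len1: "length w = Suc 0 \<Longrightarrow> \<exists>a. w = [a]" by (cases w) auto
lemma len2: "length w = 2 \<Longrightarrow> \<exists>a b. w = [a, b]" by (cases w; cases "tl w") auto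

lemma Wd_L1: "w \<in> Wd IdL 1 \<longleftrightarrow> w = [XiL]"
proof
  assume "w \<in> Wd IdL 1"
  moreover then obtain a where "w = [a]" using len1 by (auto simp: Wd_def)
  ultimately show "w = [XiL]" by (cases a) auto
qed simp
lemma Wd_O1: "w \<in> Wd IdO 1 \<longleftrightarrow> w = [Th]"
proof
  assume "w \<in> Wd IdO 1"
  moreover then obtain a where "w = [a]" using len1 by (auto simp: Wd_def)
  ultimately show "w = [Th]" by (cases a) auto
qed simp
lemma Wd_L2: "w \<in> Wd IdL 2 \<longleftrightarrow> w = [XiL, XiL] \<or> w = [Et, Th]"
proof
  assume W: "w \<in> Wd IdL 2"
  then have "length w = 2" by (simp add: Wd_def)
  then obtain a b where "w = [a, b]" using len2 by blast
  moreover note W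
  ultimately show "w = [XiL, XiL] \<or> w = [Et, Th]" by (cases a; cases b; simp add: Wd_Cons2)
qed (auto simp: Wd_Cons2)
lemma Wd_O2: "w \<in> Wd IdO 2 \<longleftrightarrow> w = [Th, XiL] \<or> w = [Xi, Th]"
proof
  assume W: "w \<in> Wd IdO 2"
  then have "length w = 2" by (simp add: Wd_def)
  then obtain a b where "w = [a, b]" using len2 by blast
  moreover note W
  ultimately show "w = [Th, XiL] \<or> w = [Xi, Th]" by (cases a; cases b; simp add: Wd_Cons2)
qed (auto simp: Wd_Cons2)

lemma Wd_L1': "w \<in> Wd IdL (Suc 0) \<longleftrightarrow> w = [XiL]" using Wd_L1 by simp
lemma Wd_O1': "w \<in> Wd IdO (Suc 0) \<longleftrightarrow> w = [Th]" using Wd_O1 by simp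

lemma ptch: "(\<beta> \<noteq> 0 \<Longrightarrow> v \<in> Wd s n \<and> wdeg v = m) \<Longrightarrow> (\<lambda>w. if w = v then \<beta> else 0) \<in> ch s n m"
  by (auto simp: ch_def)

lemma dT_pt_len: "Suc (length w) \<noteq> length v \<Longrightarrow> dT (\<lambda>w. if w = v then \<beta> else 0) w = 0"
  by (rule dT_len[where N="length v"]) (auto split: if_splits)

lemma zero_from: "c \<in> cyc s n m \<Longrightarrow> c = (\<lambda>_. 0) \<Longrightarrow> c \<in> bnd s n m"
  using ch_0 by (force simp: bnd_def)

lemma base_L1: "H_zero (cyc IdL 1 m :: (letter list \<Rightarrow> 'k::field) set) (bnd IdL 1 m)"
  unfolding H_zero_def
proof
  fix c :: "letter list \<Rightarrow> 'k" assume cc: "c \<in> cyc IdL 1 m"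
  then have c: "c \<in> ch IdL 1 m" using cycD by blast
  define \<beta> where "\<beta> = c [XiL]"
  have cw: "c w = (if w = [XiL] then \<beta> else 0)" for w
    using ch_out[OF c, of w] by (auto simp: \<beta>_def Wd_L1 Wd_L1')
  define b where "b = (\<lambda>w. if w = [Et, Th] then - \<beta> else 0)"
  have "b \<in> ch IdL 2 m" unfolding b_def
    by (rule ptch) (use ch_deg[OF c, of "[XiL]"] in \<open>auto simp: \<beta>_def Wd_Cons2\<close>)
  moreover have "c = dT b"
  proof
    fix w show "c w = dT b w"
    proof (cases "length w = 1")
      case True then obtain a where "w = [a]" using len1 by auto
      then show ?thesis by (cases a) (simp_all add: cw b_def dT_single)
    next
      case False then show ?thesis using ch_len[OF c] dT_pt_len[of w "[Et,Th]"] by (simp add: b_def)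
    qed
  qed
  ultimately show "c \<in> bnd IdL 1 m" by (auto simp: bnd_def numeral_2_eq_2 numeral_3_eq_3)
qed

lemma base_O1: "m \<noteq> 0 \<Longrightarrow> H_zero (cyc IdO 1 m :: (letter list \<Rightarrow> 'k::field) set) (bnd IdO 1 m)"
  unfolding H_zero_def
proof
  fix c :: "letter list \<Rightarrow> 'k" assume m: "m \<noteq> 0" and cc: "c \<in> cyc IdO 1 m"
  then have c: "c \<in> ch IdO 1 m" using cycD by blast
  have "c = (\<lambda>_. 0)"
  proof
    fix w show "c w = 0" using ch_out[OF c, of w] ch_deg[OF c, of w] m by (cases "w = [Th]") (auto simp: Wd_O1 Wd_O1')
  qed
  then show "c \<in> bnd IdO 1 m" using zero_from[OF cc] by simp
qed

lemma base_O1_iso: "H_iso_k (cyc IdO 1 0 :: (letter list \<Rightarrow> 'k::field) set) (bnd IdO 1 0)"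
proof -
  define z :: "letter list \<Rightarrow> 'k" where "z = (\<lambda>w. if w = [Th] then 1 else 0)"
  have zch: "z \<in> ch IdO 1 0" unfolding z_def by (rule ptch) simp
  have "dT z = (\<lambda>_. 0)"
  proof
    fix w show "dT z w = 0"
      by (cases "w = []") (simp_all add: z_def dT_pt_len)
  qed
  then have zc: "z \<in> cyc IdO 1 0" using zch by (simp add: cyc_def)
  have znb: "z \<notin> bnd IdO 1 0"
  proof
    assume "z \<in> bnd IdO 1 0"
    then obtain b :: "letter list \<Rightarrow> 'k" where "z = dT b" by (auto simp: bnd_def numeral_2_eq_2 numeral_3_eq_3)
    then have "z [Th] = dT b [Th]" by simp
    then show False by (simp add: z_def dT_single)
  qed
  have "\<forall>c\<in>cyc IdO 1 0. \<exists>a. \<exists>b\<in>bnd IdO 1 0. c = (\<lambda>x. a * z x + b x)"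
  proof
    fix c :: "letter list \<Rightarrow> 'k" assume cc: "c \<in> cyc IdO 1 0"
    then have c: "c \<in> ch IdO 1 0" using cycD by blast
    have "c = (\<lambda>x. c [Th] * z x + dT (\<lambda>_. 0) x)"
    proof
      fix w show "c w = c [Th] * z w + dT (\<lambda>_. 0) w"
        using ch_out[OF c, of w] by (auto simp: z_def Wd_O1 Wd_O1')
    qed
    moreover have "dT (\<lambda>_. 0) \<in> bnd IdO 1 0" using ch_0 unfolding bnd_def by blast
    ultimately show "\<exists>a. \<exists>b\<in>bnd IdO 1 0. c = (\<lambda>x. a * z x + b x)" by blast
  qed
  then show ?thesis unfolding H_iso_k_def using zc znb by blast
qed

lemma base_L2: "H_zero (cyc IdL 2 m :: (letter list \<Rightarrow> 'k::field) set) (bnd IdL 2 m)"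
  unfolding H_zero_def
proof
  fix c :: "letter list \<Rightarrow> 'k" assume cc: "c \<in> cyc IdL 2 m"
  then have c: "c \<in> ch IdL 2 m" and d: "dT c = (\<lambda>_. 0)" using cycD by blast+
  have "c [Et, Th] = 0" using fun_cong[OF d, of "[XiL]"] by (simp add: dT_single)
  define \<beta> where "\<beta> = c [XiL, XiL]"
  have cw: "c w = (if w = [XiL, XiL] then \<beta> else 0)" for w
    using ch_out[OF c, of w] \<open>c [Et, Th] = 0\<close> by (auto simp: \<beta>_def Wd_L2)
  define b where "b = (\<lambda>w. if w = [XiL, Et, Th] then \<beta> else 0)"
  have "b \<in> ch IdL 3 m" unfolding b_def
    by (rule ptch) (use ch_deg[OF c, of "[XiL, XiL]"] in \<open>auto simp: \<beta>_def Wd_Cons2\<close>)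
  moreover have "c = dT b"
  proof
    fix w show "c w = dT b w"
    proof (cases "length w = 2")
      case True then obtain p q where "w = [p, q]" using len2 by blast
      then show ?thesis by (cases p; cases q) (simp_all add: cw b_def dT_pair)
    next
      case False then show ?thesis using ch_len[OF c] dT_pt_len[of w "[XiL, Et, Th]"] by (simp add: b_def)
    qed
  qed
  ultimately show "c \<in> bnd IdL 2 m" by (auto simp: bnd_def numeral_2_eq_2 numeral_3_eq_3)
qed

lemma base_O2: "m \<noteq> 1 \<Longrightarrow> H_zero (cyc IdO 2 m :: (letter list \<Rightarrow> 'k::field) set) (bnd IdO 2 m)"
  unfolding H_zero_def
proof
  fix c :: "letter list \<Rightarrow> 'k" assume m: "m \<noteq> 1" and cc: "c \<in> cyc IdO 2 m"
  then have c: "c \<in> ch IdO 2 m" using cycD by blast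
  have "c = (\<lambda>_. 0)"
  proof
    fix w show "c w = 0" using ch_out[OF c, of w] ch_deg[OF c, of w] m by (cases "w \<in> Wd IdO 2") (auto simp: Wd_O2)
  qed
  then show "c \<in> bnd IdO 2 m" using zero_from[OF cc] by simp
qed

lemma base_O2_iso: "H_iso_k (cyc IdO 2 1 :: (letter list \<Rightarrow> 'k::field) set) (bnd IdO 2 1)"
proof -
  define z :: "letter list \<Rightarrow> 'k" where "z = (\<lambda>w. if w = [Th, XiL] then 1 else 0)"
  have zch: "z \<in> ch IdO 2 1" unfolding z_def by (rule ptch) (simp add: Wd_Cons2)
  have "dT z = (\<lambda>_. 0)"
  proof
    fix w show "dT z w = 0"
    proof (cases "length w = 1")
      case True then obtain a where "w = [a]" using len1 by auto
      then show ?thesis by (cases a) (simp_all add: z_def dT_single)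
    next
      case False then show ?thesis using dT_pt_len[of w "[Th, XiL]"] by (simp add: z_def)
    qed
  qed
  then have zc: "z \<in> cyc IdO 2 1" using zch by (simp add: cyc_def)
  have znb: "z \<notin> bnd IdO 2 1"
  proof
    assume "z \<in> bnd IdO 2 1"
    then obtain b :: "letter list \<Rightarrow> 'k" where "z = dT b" by (auto simp: bnd_def numeral_2_eq_2 numeral_3_eq_3)
    then have "z [Th, XiL] = dT b [Th, XiL]" "z [Xi, Th] = dT b [Xi, Th]" by simp_all
    then show False by (simp add: z_def dT_pair)
  qed
  have "\<forall>c\<in>cyc IdO 2 1. \<exists>a. \<exists>b\<in>bnd IdO 2 1. c = (\<lambda>x. a * z x + b x)"
  proof
    fix c :: "letter list \<Rightarrow> 'k" assume cc: "c \<in> cyc IdO 2 1"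
    then have c: "c \<in> ch IdO 2 1" using cycD by blast
    define c1 c2 where "c1 = c [Th, XiL]" and "c2 = c [Xi, Th]"
    have cw: "c w = (if w = [Th, XiL] then c1 else if w = [Xi, Th] then c2 else 0)" for w
      using ch_out[OF c, of w] by (auto simp: c1_def c2_def Wd_O2)
    define b where "b = (\<lambda>w. if w = [Th, Et, Th] then - c2 else 0)"
    have bch: "b \<in> ch IdO 3 1" unfolding b_def by (rule ptch) (simp add: Wd_Cons2)
    have "c = (\<lambda>x. (c1 + c2) * z x + dT b x)"
    proof
      fix w show "c w = (c1 + c2) * z w + dT b w"
      proof (cases "length w = 2")
        case True then obtain p q where "w = [p, q]" using len2 by blast
        then show ?thesis by (cases p; cases q) (simp_all add: cw b_def z_def dT_pair)
      next
        case False then have "w \<noteq> [Th, XiL]" by auto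
        then show ?thesis using False ch_len[OF c, of w] dT_pt_len[of w "[Th, Et, Th]" "- c2"] by (simp add: b_def z_def)
      qed
    qed
    moreover have "dT b \<in> bnd IdO 2 1" using bch by (simp add: bnd_def numeral_2_eq_2 numeral_3_eq_3)
    ultimately show "\<exists>a. \<exists>b\<in>bnd IdO 2 1. c = (\<lambda>x. a * z x + b x)" by blast
  qed
  then show ?thesis unfolding H_iso_k_def using zc znb by blast
qed



definition nz :: "idem \<Rightarrow> nat \<Rightarrow> int \<Rightarrow> bool" where
  "nz s n m \<longleftrightarrow> (int n - m \<ge> 1 \<and> (if s = IdL then int n = 4 * (int n - m) - 1 \<or> int n = 4 * (int n - m)
      else int n = 4 * (int n - m) - 3 \<or> int n = 4 * (int n - m) - 2))"

lemma nz_L1: "\<not> nz IdL 1 m" unfolding nz_def by simp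
lemma nz_O1: "nz IdO 1 m \<longleftrightarrow> m = 0" unfolding nz_def by auto
lemma nz_L2: "\<not> nz IdL 2 m" unfolding nz_def by auto
lemma nz_O2: "nz IdO 2 m \<longleftrightarrow> m = 1" unfolding nz_def by auto

lemma nz_step: "k \<ge> 1 \<Longrightarrow> nz s (Suc (Suc k)) m \<longleftrightarrow> nz (flip s) k (m - 1 - dl s)"
  by (cases s) (auto simp: nz_def dl_def)

lemma main: fixes n :: nat assumes "n \<ge> 1"
  shows "(if nz s n m then H_iso_k else H_zero) (cyc s n m :: (letter list \<Rightarrow> 'k::field) set) (bnd s n m)"
  using assms
proof (induction n arbitrary: s m rule: less_induct)
  case (less n)
  show ?case
  proof (cases "n \<le> 2")
    case True
    then have "n = 1 \<or> n = 2" using less.prems by auto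
    then show ?thesis
    proof
      assume n: "n = 1"
      show ?thesis
      proof (cases s)
        case IdL then show ?thesis using n base_L1 nz_L1 by simp
      next
        case IdO then show ?thesis using n base_O1 base_O1_iso nz_O1 by auto
      qed
    next
      assume n: "n = 2"
      show ?thesis
      proof (cases s)
        case IdL then show ?thesis using n base_L2 nz_L2 by simp
      next
        case IdO then show ?thesis using n base_O2 base_O2_iso nz_O2 by auto
      qed
    qed
  next
    case False
    then obtain k where n: "n = Suc (Suc k)" and k: "k \<ge> 1"
    proof -
      have "n = Suc (Suc (n - 2))" "n - 2 \<ge> 1" using False by auto
      then show ?thesis using that by blast
    qed
    have IH: "(if nz (flip s) k (m - 1 - dl s) then H_iso_k else H_zero) (cyc (flip s) k (m - 1 - dl s) :: (letter list \<Rightarrow> 'k) set) (bnd (flip s) k (m - 1 - dl s))"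
      using less.IH[of k] n k by simp
    show ?thesis
    proof (cases "nz (flip s) k (m - 1 - dl s)")
      case True then show ?thesis using IH step_iso[OF k] n nz_step[OF k] by simp
    next
      case False then show ?thesis using IH step_zero[OF k] n nz_step[OF k] by simp
    qed
  qed
qed



lemma UNIV_letter: "(UNIV :: letter set) = {Th, Et, Xi, XiL}"
  using letter.exhaust by blast

lemma finite_Wd: "finite (Wd s n)"
proof -
  have "Wd s n \<subseteq> {xs. set xs \<subseteq> (UNIV :: letter set) \<and> length xs = n}" by (auto simp: Wd_def)
  moreover have "finite {xs. set xs \<subseteq> (UNIV :: letter set) \<and> length xs = n}"
    by (rule finite_lists_length_eq) (simp add: UNIV_letter)
  ultimately show ?thesis by (rule finite_subset)
qed

lemma mult_Some: "mult a b = Some x \<longleftrightarrow> (a = Th \<and> b = Et \<and> x = Xi) \<or> (a = Et \<and> b = Th \<and> x = XiL)"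
  by (cases a; cases b; auto)

lemma take_two_drop: "Suc j < length v \<Longrightarrow> take j v @ v ! j # v ! Suc j # drop (Suc (Suc j)) v = v"
  by (metis Cons_nth_drop_Suc Suc_lessD append_take_drop_id)

lemma merge_iff: assumes j: "Suc j < length v"
  shows "merge j v = Some w \<longleftrightarrow> (j < length w \<and> isx (w ! j) \<and> v = spl j w)"
proof
  assume "merge j v = Some w"
  then obtain x where mx: "mult (v!j) (v!Suc j) = Some x" and w: "w = take j v @ x # drop (Suc (Suc j)) v"
    unfolding merge_def by (auto split: option.splits)
  have lt: "j < length v" using j by simp
  have wj: "w ! j = x" using w lt by (simp add: nth_append)
  have jw: "j < length w" using w lt by simp
  have tw: "take j w = take j v" using w lt by simp
  have dw: "drop (Suc j) w = drop (Suc (Suc j)) v" using w lt by simp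
  have px: "pr x = [v!j, v!Suc j] \<and> isx x" using mx by (auto simp: mult_Some)
  have "spl j w = v" unfolding spl_def wj tw dw using px take_two_drop[OF j] by simp
  then show "j < length w \<and> isx (w ! j) \<and> v = spl j w" using jw wj px by simp
next
  assume A: "j < length w \<and> isx (w ! j) \<and> v = spl j w"
  then have jw: "j < length w" and xw: "isx (w!j)" and v: "v = spl j w" by auto
  obtain t1 t2 where p: "pr (w!j) = [t1, t2]" and m: "mult t1 t2 = Some (w!j)"
    using xw by (cases "w!j") (auto simp: isx_def)
  have v': "v = take j w @ t1 # t2 # drop (Suc j) w" using v p by (simp add: spl_def)
  have tj: "length (take j w) = j" using jw by simp
  have "v ! j = t1" "v ! Suc j = t2" using v' tj by (simp_all add: nth_append)
  moreover have "take j v = take j w" "drop (Suc (Suc j)) v = drop (Suc j) w" using v' tj by simp_all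
  ultimately show "merge j v = Some w" using m jw
    by (simp add: merge_def id_take_nth_drop[symmetric])
qed

lemma dcoef_alt: "dcoef v w = (\<Sum>j<length v - 1. if merge j v = Some w then sg j else 0)"
  unfolding dcoef_def sg_def by (rule sum.cong) (auto split: option.splits)

lemma dd_eq: assumes c: "c \<in> ch IdL n m" shows "dd n c w = dT c w"
proof -
  let ?S = "Wd IdL n"
  have S: "Cwords n = ?S" by (auto simp: Cwords_def Cword_def Wd_def)
  have fin: "finite ?S" by (rule finite_Wd)
  define G where "G j = (if j < length w \<and> isx (w!j) then sg j * c (spl j w) else 0)" for j
  have "dd n c w = (\<Sum>v\<in>?S. \<Sum>j<n - 1. c v * (if merge j v = Some w then sg j else 0))"
    unfolding dd_def S dcoef_alt sum_distrib_left by (rule sum.cong) (auto simp: Wd_def)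
  also have "\<dots> = (\<Sum>j<n - 1. \<Sum>v\<in>?S. c v * (if merge j v = Some w then sg j else 0))"
    by (rule sum.swap)
  also have "\<dots> = (\<Sum>j<n - 1. G j)"
  proof (rule sum.cong)
    fix j assume "j \<in> {..<n - 1}"
    then have jn: "Suc j < n" by auto
    have "(\<Sum>v\<in>?S. c v * (if merge j v = Some w then sg j else 0)) =
          (\<Sum>v\<in>?S. if spl j w = v then (if j < length w \<and> isx (w!j) then sg j * c v else 0) else 0)"
    proof (rule sum.cong)
      fix v assume "v \<in> ?S"
      then have "Suc j < length v" using jn by (simp add: Wd_def)
      then show "c v * (if merge j v = Some w then sg j else 0) =
          (if spl j w = v then (if j < length w \<and> isx (w!j) then sg j * c v else 0) else 0)"
        using merge_iff[of j v w] by (auto simp: mult.commute)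
    qed simp
    also have "\<dots> = (if spl j w \<in> ?S then (if j < length w \<and> isx (w!j) then sg j * c (spl j w) else 0) else 0)"
      by (rule sum.delta'[OF fin])
    also have "\<dots> = G j" using ch_out[OF c, of "spl j w"] by (auto simp: G_def)
    finally show "(\<Sum>v\<in>?S. c v * (if merge j v = Some w then sg j else 0)) = G j" .
  qed simp
  also have "\<dots> = (\<Sum>j<length w. G j)"
  proof (cases "Suc (length w) = n")
    case True then have "n - 1 = length w" by simp
    then show ?thesis by simp
  next
    case False
    have "G j = 0" for j
      using ch_len[OF c, of "spl j w"] length_spl[of j w] False by (auto simp: G_def)
    then show ?thesis by simp
  qed
  also have "\<dots> = dT c w" unfolding dT_def G_def by (rule sum.cong) auto
  finally show ?thesis .
qed

lemma chains_eq: "chains n m = ch IdL n m"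
  by (auto simp: chains_def ch_def Cwords_def Cword_def Wd_def)

lemma cycles_eq: "(cycles n m :: (letter list \<Rightarrow> 'k::field) set) = cyc IdL n m"
proof -
  have "c \<in> cycles n m \<longleftrightarrow> c \<in> cyc IdL n m" for c :: "letter list \<Rightarrow> 'k"
  proof
    assume "c \<in> cycles n m"
    then have c: "c \<in> ch IdL n m" and "dd n c = (\<lambda>_. 0)" by (auto simp: cycles_def chains_eq)
    moreover have "dd n c = dT c" using dd_eq[OF c] by (rule ext)
    ultimately show "c \<in> cyc IdL n m" by (simp add: cyc_def)
  next
    assume "c \<in> cyc IdL n m"
    then have c: "c \<in> ch IdL n m" and "dT c = (\<lambda>_. 0)" by (auto simp: cyc_def)
    moreover have "dd n c = dT c" using dd_eq[OF c] by (rule ext)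
    ultimately show "c \<in> cycles n m" by (simp add: cycles_def chains_eq)
  qed
  then show ?thesis by blast
qed

lemma boundaries_eq: "(boundaries n m :: (letter list \<Rightarrow> 'k::field) set) = bnd IdL n m"
  unfolding boundaries_def bnd_def chains_eq
  by (rule image_cong) (auto intro: ext dd_eq)

lemma final: "n \<ge> 1 \<Longrightarrow> (if nz IdL n m then H_iso_k else H_zero) (cycles n m :: (letter list \<Rightarrow> 'k::field) set) (boundaries n m)"
  using main[of n IdL m] by (simp add: cycles_eq boundaries_eq)

lemma nz0: "\<not> nz IdL n (int n)" by (simp add: nz_def)
lemma nz1: "nz IdL n (int n - 1) \<longleftrightarrow> n \<in> {3, 4}" by (auto simp: nz_def)
lemma nz2: "nz IdL n (int n - 2) \<longleftrightarrow> n \<in> {7, 8}" by (auto simp: nz_def)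
lemma nz3: "nz IdL n (int n - 3) \<longleftrightarrow> n \<in> {11, 12}" by (auto simp: nz_def)

theorem mainTheorem2:
  assumes char2: "(2::'k::field) \<noteq> 0" and char3: "(3::'k) \<noteq> 0"
    and n: "n \<ge> 1"
  shows "H_zero (cycles n (int n) :: (letter list \<Rightarrow> 'k) set) (boundaries n (int n)) \<and>
         (if n \<in> {3, 4} then H_iso_k else H_zero)
           (cycles n (int n - 1) :: (letter list \<Rightarrow> 'k) set) (boundaries n (int n - 1)) \<and>
         (if n \<in> {7, 8} then H_iso_k else H_zero)
           (cycles n (int n - 2) :: (letter list \<Rightarrow> 'k) set) (boundaries n (int n - 2)) \<and>
         (if n \<in> {11, 12} then H_iso_k else H_zero)
           (cycles n (int n - 3) :: (letter list \<Rightarrow> 'k) set) (boundaries n (int n - 3))"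
proof -
  have A: "(if nz IdL n m then H_iso_k else H_zero) (cycles n m :: (letter list \<Rightarrow> 'k) set) (boundaries n m)" for m
    using final[OF n] .
  show ?thesis
    using nz0[of n] A[of "int n"] A[of "int n - 1"] A[of "int n - 2"] A[of "int n - 3"]
    unfolding nz1 nz2 nz3 by simp
qed

end
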